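(* Let Assumptions (A1), (A3) and (A4) below hold and let $\alpha\in\mathcal K_\infty$. Then there exist $\delta\in\mathcal L$ and $N_0\in\mathbb{N}$ such that for all $x\in\mathbb{X}_{\alpha,N_0}$ and all $N\ge N_0$: $$V_{N+1}^\beta(x)\le\tfrac{N}{N+1}V_N^\beta(x)+\ell^\star+\delta(N+1),$$ and, with $x_1=x_{\mu_N^\beta}(1,x)=f(x,\mu_N^\beta(x))$, $$V_N^\beta(x_1)\le V_N^\beta(x)+\tfrac{N+1}{N}\big(\ell^\star-\ell(x,\mu_N^\beta(x))+\delta(N+1)\big).$$
   Context: System $x(k+1)=f(x(k),u(k))$ with constraint sets $\mathbb{X}\subset\mathbb{R}^n$, $\mathbb{U}\subset\mathbb{R}^m$ and stage cost $\ell:\mathbb{X}\times\mathbb{U}\to\mathbb{R}$, which is assumed non-negative. For $u\in\mathbb{U}^T$, $x_u(0,x)=x$, $x_u(k+1,x)=f(x_u(k,x),u(k))$; $\mathbb{U}^T(x)$ is the set of $u\in\mathbb{U}^T$ with $x_u(k,x)\in\mathbb{X}$ for $k=0,\dots,T$. A feasible $p$-periodic orbit is $\Pi\in(\mathbb{X}\times\mathbb{U})^p$ with $\Pi_\mathbb{X}([k+1]_p)=f(\Pi(k))$ ($[k]_p$ = $k$ mod $p$); $\|(x,u)\|_\Pi:=\min_k\|(x,u)-\Pi(k)\|$, $\|x\|_{\Pi_\mathbb{X}}:=\min_k\|x-\Pi_\mathbb{X}(k)\|$; $\ell^\star:=\inf$ over all feasible periodic orbits of $\frac1p\sum_{k=0}^{p-1}\ell(\Pi(k))$;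 $\Pi^\star$ is a fixed feasible $p^\star$-periodic orbit attaining $\ell^\star$. $\mathcal L$: continuous decreasing functions $[0,\infty)\to[0,\infty)$ tending to $0$. (A1) $f,\ell$ continuous, $\mathbb{X},\mathbb{U}$ compact. (A3) There are $\lambda:\mathbb{X}\to\mathbb{R}$, $\bar\lambda$ with $|\lambda|\le\bar\lambda$ on $\mathbb{X}$, and $\underline\alpha_{\tilde\ell}\in\mathcal K_\infty$ with $\ell(x,u)-\ell^\star+\lambda(x)-\lambda(f(x,u))\ge\underline\alpha_{\tilde\ell}(\|(x,u)\|_{\Pi^\star})$ for all $x\in\mathbb{X}$, $u\in\mathbb{U}^1(x)$. (A4) There are $\kappa>0$, $M'\in\mathbb{N}$, $\rho\in\mathcal K_\infty$ such that for all $z\in\{\Pi^\star_\mathbb{X}(k)\}$ and $x,y\in\mathbb{X}$ with $\|x-z\|,\|y-z\|\le\kappa$ there is $u\in\mathbb{U}^{M'}(x)$ with $x_u(M',x)=y$ and $\|(x_u(k,x),u(k))\|_{\Pi^\star}\le\rho(\max\{\|x\|_{\Pi^\star_\mathbb{X}},\|y\|_{\Pi^\star_\mathbb{X}}\})$ for $k=0,\dots,M'-1$. Discounted MPC: $\beta_N(k)=\frac{N-k}{N}$, $J_N^\beta(x,u)=\sum_{k=0}^{N-1}\beta_N(k)\ell(x_u(k,x),u(k))$, $V_N^\beta(x)=\inf_{u\in\mathbb{U}^N(x)}J_N^\beta(x,u)$, $u^\beta_{N,x}$ a minimizer, $\mu_N^\beta(x)=u^\beta_{N,x}(0)$. Weak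 turnpike: $Q^\beta_\varepsilon(N,x)$ is the number of $k\in\{0,\dots,N-1\}$ with $\|(x_{u^\beta_{N,x}}(k,x),u^\beta_{N,x}(k))\|_{\Pi^\star}\le\varepsilon$; $\mathbb{X}_{\alpha,N_0}$ is the set of $x\in\mathbb{X}$ with $Q^\beta_\varepsilon(N,x)\ge N-\sqrt N/\alpha(\varepsilon)$ for all $N\ge N_0$, $\varepsilon>0$. *)

theory Defs
  imports "HOL-Analysis.Analysis"
begin

definition Kinf :: "(real \<Rightarrow> real) \<Rightarrow> bool" where
  "Kinf a \<longleftrightarrow> continuous_on {0..} a \<and> a 0 = 0 \<and> strict_mono_on {0..} a
     \<and> filterlim a at_top at_top"

definition classL :: "(real \<Rightarrow> real) \<Rightarrow> bool" where
  "classL d \<longleftrightarrow> continuous_on {0..} d \<and> (\<forall>t\<ge>0. d t \<ge> 0)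
     \<and> (\<forall>s t. 0 \<le> s \<longrightarrow> s \<le> t \<longrightarrow> d t \<le> d s) \<and> (d \<longlongrightarrow> 0) at_top"

fun traj :: "('x \<Rightarrow> 'u \<Rightarrow> 'x) \<Rightarrow> 'x \<Rightarrow> (nat \<Rightarrow> 'u) \<Rightarrow> nat \<Rightarrow> 'x" where
  "traj f x u 0 = x"
| "traj f x u (Suc k) = f (traj f x u k) (u k)"

definition admissible :: "('x \<Rightarrow> 'u \<Rightarrow> 'x) \<Rightarrow> 'x set \<Rightarrow> 'u set \<Rightarrow> nat \<Rightarrow> 'x \<Rightarrow> (nat \<Rightarrow> 'u) \<Rightarrow> bool" where
  "admissible f X U T x u \<longleftrightarrow> (\<forall>k<T. u k \<in> U) \<and> (\<forall>k\<le>T. traj f x u k \<in> X)"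

definition periodic_orbit :: "('x \<Rightarrow> 'u \<Rightarrow> 'x) \<Rightarrow> 'x set \<Rightarrow> 'u set \<Rightarrow> nat \<Rightarrow> (nat \<Rightarrow> 'x \<times> 'u) \<Rightarrow> bool" where
  "periodic_orbit f X U p P \<longleftrightarrow> p > 0 \<and> (\<forall>k<p. P k \<in> X \<times> U)
     \<and> (\<forall>k<p. fst (P (Suc k mod p)) = f (fst (P k)) (snd (P k)))"

definition avg_cost :: "('x \<Rightarrow> 'u \<Rightarrow> real) \<Rightarrow> nat \<Rightarrow> (nat \<Rightarrow> 'x \<times> 'u) \<Rightarrow> real" where
  "avg_cost l p P = (\<Sum>k<p. case_prod l (P k)) / real p"

definition ell_star :: "('x \<Rightarrow> 'u \<Rightarrow> 'x) \<Rightarrow> 'x set \<Rightarrow> 'u set \<Rightarrow> ('x \<Rightarrow> 'u \<Rightarrow> real) \<Rightarrow> real" where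
  "ell_star f X U l = Inf {avg_cost l p P | p P. periodic_orbit f X U p P}"

definition orbit_dist :: "nat \<Rightarrow> (nat \<Rightarrow> 'x::real_normed_vector \<times> 'u::real_normed_vector) \<Rightarrow> 'x \<times> 'u \<Rightarrow> real" where
  "orbit_dist p P z = Min ((\<lambda>k. norm (z - P k)) ` {..<p})"

definition orbit_state_dist :: "nat \<Rightarrow> (nat \<Rightarrow> 'x::real_normed_vector \<times> 'u) \<Rightarrow> 'x \<Rightarrow> real" where
  "orbit_state_dist p P x = Min ((\<lambda>k. norm (x - fst (P k))) ` {..<p})"

definition Jbeta :: "('x \<Rightarrow> 'u \<Rightarrow> 'x) \<Rightarrow> ('x \<Rightarrow> 'u \<Rightarrow> real) \<Rightarrow> nat \<Rightarrow> 'x \<Rightarrow> (nat \<Rightarrow> 'u) \<Rightarrow> real" where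
  "Jbeta f l N x u = (\<Sum>k<N. (real (N - k) / real N) * l (traj f x u k) (u k))"

text \<open>Optimal value V_N^beta, as an extended real (infimum over the empty set is +infinity).\<close>
definition Vbeta :: "('x \<Rightarrow> 'u \<Rightarrow> 'x) \<Rightarrow> 'x set \<Rightarrow> 'u set \<Rightarrow> ('x \<Rightarrow> 'u \<Rightarrow> real) \<Rightarrow> nat \<Rightarrow> 'x \<Rightarrow> ereal" where
  "Vbeta f X U l N x = (INF u\<in>{u. admissible f X U N x u}. ereal (Jbeta f l N x u))"

definition Qcount :: "('x::real_normed_vector \<Rightarrow> 'u::real_normed_vector \<Rightarrow> 'x) \<Rightarrow> (nat \<Rightarrow> 'x \<Rightarrow> nat \<Rightarrow> 'u)
    \<Rightarrow> nat \<Rightarrow> (nat \<Rightarrow> 'x \<times> 'u) \<Rightarrow> real \<Rightarrow> nat \<Rightarrow> 'x \<Rightarrow> nat" where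
  "Qcount f uopt p P eps N x =
     card {k. k < N \<and> orbit_dist p P (traj f x (uopt N x) k, uopt N x k) \<le> eps}"

text \<open>The set X_{alpha,N0}; membership also requires U^N(x) nonempty for N >= N0, so that the
  minimizer uopt N x is an actual minimizer.\<close>
definition Xturn :: "('x::real_normed_vector \<Rightarrow> 'u::real_normed_vector \<Rightarrow> 'x) \<Rightarrow> 'x set \<Rightarrow> 'u set
    \<Rightarrow> (nat \<Rightarrow> 'x \<Rightarrow> nat \<Rightarrow> 'u) \<Rightarrow> nat \<Rightarrow> (nat \<Rightarrow> 'x \<times> 'u) \<Rightarrow> (real \<Rightarrow> real) \<Rightarrow> nat \<Rightarrow> 'x set" where
  "Xturn f X U uopt p P a N0 = {x \<in> X. \<forall>N\<ge>N0. (\<exists>u. admissible f X U N x u) \<and>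
      (\<forall>eps>0. real (Qcount f uopt p P eps N x) \<ge> real N - sqrt (real N) / a eps)}"

end

theory Submission
  imports Defs
begin


lemma traj_cong: "(\<forall>i<n. u i = v i) \<Longrightarrow> traj f x u n = traj f x v n"
  by (induction n) auto

definition cat :: "(nat \<Rightarrow> 'u) \<Rightarrow> nat \<Rightarrow> (nat \<Rightarrow> 'u) \<Rightarrow> nat \<Rightarrow> 'u" where
  "cat u k w = (\<lambda>i. if i < k then u i else w (i - k))"

lemma traj_cat_le: "i \<le> k \<Longrightarrow> traj f x (cat u k w) i = traj f x u i"
  by (rule traj_cong) (auto simp: cat_def)

lemma traj_cat_ge: "traj f x (cat u k w) (k + d) = traj f (traj f x u k) w d"
proof (induction d)
  case 0 then show ?case using traj_cat_le[of k k f x u w] by simp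
next
  case (Suc d) then show ?case by (simp add: cat_def)
qed

lemma traj_shift: "traj f (f x (u 0)) (\<lambda>i. u (Suc i)) n = traj f x u (Suc n)"
  by (induction n) auto

lemma cum: "a \<le> b \<Longrightarrow> (\<Sum>i\<in>{a..<b}. real (b - i) * g i) = (\<Sum>m\<in>{a..<b}. \<Sum>i\<in>{a..m}. g i)"
proof (induction b rule: dec_induct)
  case base then show ?case by simp
next
  case (step b)
  have "(\<Sum>i\<in>{a..<Suc b}. real (Suc b - i) * g i) = (\<Sum>i\<in>{a..<b}. real (Suc b - i) * g i) + g b"
    using step by simp
  also have "(\<Sum>i\<in>{a..<b}. real (Suc b - i) * g i) = (\<Sum>i\<in>{a..<b}. real (b - i) * g i + g i)"
    by (rule sum.cong) (auto simp: Suc_diff_le of_nat_Suc algebra_simps)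
  also have "\<dots> = (\<Sum>i\<in>{a..<b}. real (b - i) * g i) + (\<Sum>i\<in>{a..<b}. g i)"
    by (rule sum.distrib)
  also have "\<dots> = (\<Sum>m\<in>{a..<b}. \<Sum>i\<in>{a..m}. g i) + (\<Sum>i\<in>{a..<b}. g i)"
    by (simp only: step.IH)
  finally show ?case using step
    by (simp add: atLeastLessThanSuc_atLeastAtMost[symmetric] sum.atLeastLessThan_Suc)
qed

lemma wsum_const: "(\<Sum>i<n. real (n - i)) = real n * (real n + 1) / 2"
proof (induction n)
  case 0 then show ?case by simp
next
  case (Suc n)
  have "(\<Sum>i<Suc n. real (Suc n - i)) = (\<Sum>i<n. real (n - i) + 1) + 1"
    by (simp add: Suc_diff_le add.commute)
  also have "\<dots> = (\<Sum>i<n. real (n - i)) + real n + 1"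
    by (simp add: sum.distrib)
  finally show ?case using Suc by (simp add: field_simps)
qed

lemma Jbeta_eq: "Jbeta f l N x u = (\<Sum>i<N. real (N - i) * l (traj f x u i) (u i)) / real N"
  unfolding Jbeta_def by (simp add: sum_divide_distrib)

lemma sum_split_add: "(\<Sum>t<m+(d::nat). g t) = (\<Sum>t<m. g t) + (\<Sum>t<d. (g (m + t)::real))"
proof (induction d)
  case 0 then show ?case by simp
next
  case (Suc d) then show ?case by simp
qed

lemma cat_lt: "i < k \<Longrightarrow> h (traj f x (cat u k w) i) (cat u k w i) = h (traj f x u i) (u i)"
  using traj_cat_le[of i k f x u w] by (simp add: cat_def)

lemma cat_ge: "k \<le> i \<Longrightarrow> h (traj f x (cat u k w) i) (cat u k w i)
    = h (traj f (traj f x u k) w (i - k)) (w (i - k))"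
  using traj_cat_ge[of f x u k w "i - k"] by (simp add: cat_def)

lemma cat_psum:
  assumes "k \<le> m"
  shows "(\<Sum>i\<in>{k..m}. h (traj f x (cat u k w) i) (cat u k w i) :: real)
       = (\<Sum>t<Suc (m - k). h (traj f (traj f x u k) w t) (w t))"
proof -
  have "(\<Sum>i\<in>{k..m}. h (traj f x (cat u k w) i) (cat u k w i))
      = (\<Sum>t\<in>{0..m - k}. h (traj f x (cat u k w) (k + t)) (cat u k w (k + t)))"
    using sum.atLeastAtMost_shift_0[OF assms] by (simp add: comp_def)
  also have "\<dots> = (\<Sum>t\<in>{0..m - k}. h (traj f (traj f x u k) w t) (w t))"
    by (intro sum.cong refl) (simp add: cat_ge)
  finally show ?thesis by (simp add: atLeast0AtMost lessThan_Suc_atMost)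
qed

lemma split_at: "(k::nat) \<le> n \<Longrightarrow> (\<Sum>i<n. g i :: real) = (\<Sum>i<k. g i) + (\<Sum>i\<in>{k..<n}. g i)"
  using sum.atLeastLessThan_concat[of 0 k n g] by (simp add: atLeast0LessThan)

lemma wsplit: "(\<Sum>i<n. real (n - i) * h i) = (\<Sum>i<n. real (n - i) * (h i - e)) + e * (real n * (real n + 1) / 2)"
proof -
  have "(\<Sum>i<n. real (n - i) * h i) = (\<Sum>i<n. real (n - i) * (h i - e) + e * real (n - i))"
    by (intro sum.cong) (auto simp: algebra_simps)
  also have "\<dots> = (\<Sum>i<n. real (n - i) * (h i - e)) + e * (\<Sum>i<n. real (n - i))"
    by (simp add: sum.distrib sum_distrib_left)
  finally show ?thesis by (simp only: wsum_const)
qed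



locale mpc =
  fixes f :: "'x::real_normed_vector \<Rightarrow> 'u::real_normed_vector \<Rightarrow> 'x"
    and X :: "'x set" and U :: "'u set" and l :: "'x \<Rightarrow> 'u \<Rightarrow> real"
    and p :: nat and P :: "nat \<Rightarrow> 'x \<times> 'u" and es :: real
    and lam :: "'x \<Rightarrow> real" and lbar :: real and L :: real and kappa :: real and M' :: nat
    and uopt :: "nat \<Rightarrow> 'x \<Rightarrow> nat \<Rightarrow> 'u"
  assumes lnn: "\<forall>x\<in>X. \<forall>u\<in>U. l x u \<ge> 0"
    and orb: "periodic_orbit f X U p P"
    and avg: "avg_cost l p P = es"
    and diss: "\<forall>x\<in>X. \<forall>u\<in>U. f x u \<in> X \<longrightarrow> l x u - es + lam x - lam (f x u) \<ge> 0"
    and lamb: "\<forall>x\<in>X. \<bar>lam x\<bar> \<le> lbar"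
    and Lb: "\<forall>x\<in>X. \<forall>u\<in>U. l x u \<le> L"
    and kap: "kappa > 0"
    and steer: "\<forall>z\<in>fst ` P ` {..<p}. \<forall>x\<in>X. norm (x - z) \<le> kappa \<longrightarrow>
                  (\<exists>u. admissible f X U M' x u \<and> traj f x u M' = z)"
    and uopt: "\<forall>N x. (\<exists>u. admissible f X U N x u) \<longrightarrow>
              admissible f X U N x (uopt N x) \<and> ereal (Jbeta f l N x (uopt N x)) = Vbeta f X U l N x"
begin

lemma p_pos: "p > 0" using orb by (simp add: periodic_orbit_def)

lemma orbX: "j < p \<Longrightarrow> fst (P j) \<in> X" and orbU: "j < p \<Longrightarrow> snd (P j) \<in> U"
  and orbf: "j < p \<Longrightarrow> f (fst (P j)) (snd (P j)) = fst (P (Suc j mod p))"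
  using orb by (auto simp: periodic_orbit_def mem_Times_iff)

lemma es_nonneg: "es \<ge> 0"
proof -
  have "(\<Sum>k<p. case_prod l (P k)) \<ge> 0"
    using lnn orbX orbU by (intro sum_nonneg) (auto simp: case_prod_beta)
  then show ?thesis using avg unfolding avg_cost_def by (metis divide_nonneg_nonneg of_nat_0_le_iff)
qed

lemma lbar_nonneg: "lbar \<ge> 0"
  using lamb orbX[of 0] p_pos by force

lemma L_nonneg: "L \<ge> 0"
  using Lb lnn orbX[of 0] orbU[of 0] p_pos by force

lemma orbit_eq:
  assumes j: "j < p"
  shows "l (fst (P j)) (snd (P j)) - es = lam (fst (P (Suc j mod p))) - lam (fst (P j))"
proof -
  define g where "g j = l (fst (P j)) (snd (P j)) - es + lam (fst (P j)) - lam (fst (P (Suc j mod p)))" for j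
  have gnn: "g j \<ge> 0" if "j < p" for j
    using diss orbX[OF that] orbU[OF that] orbf[OF that] orbX[of "Suc j mod p"] p_pos
    unfolding g_def by (metis mod_less_divisor)
  have re: "(\<Sum>j<p. h (Suc j mod p)) = (\<Sum>j<p. h j)" for h :: "nat \<Rightarrow> real"
  proof -
    have "bij_betw (\<lambda>j. Suc j mod p) {..<p} {..<p}"
    proof (rule bij_betw_imageI)
      show "inj_on (\<lambda>j. Suc j mod p) {..<p}"
        by (auto simp: inj_on_def) (metis Suc_inject lessThan_iff mod_less mod_Suc not_less_eq
              nat.distinct(1))
    next
      show "(\<lambda>j. Suc j mod p) ` {..<p} = {..<p}"
      proof
        show "(\<lambda>j. Suc j mod p) ` {..<p} \<subseteq> {..<p}" using p_pos by auto
        show "{..<p} \<subseteq> (\<lambda>j. Suc j mod p) ` {..<p}"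
        proof
          fix i assume i: "i \<in> {..<p}"
          show "i \<in> (\<lambda>j. Suc j mod p) ` {..<p}"
          proof (cases i)
            case 0 then show ?thesis using p_pos by (intro image_eqI[of _ _ "p - 1"]) auto
          next
            case (Suc m) then show ?thesis using i by (intro image_eqI[of _ _ m]) auto
          qed
        qed
      qed
    qed
    then show ?thesis by (rule sum.reindex_bij_betw)
  qed
  have "(\<Sum>j<p. g j) = (\<Sum>j<p. l (fst (P j)) (snd (P j))) - real p * es"
    unfolding g_def by (simp add: sum.distrib sum_subtractf re[of "\<lambda>j. lam (fst (P j))"])
  also have "(\<Sum>j<p. l (fst (P j)) (snd (P j))) = real p * es"
    using avg p_pos by (simp add: avg_cost_def case_prod_beta field_simps)
  finally have "(\<Sum>j<p. g j) = 0" by simp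
  then have "\<forall>j\<in>{..<p}. g j = 0"
    by (subst sum_nonneg_eq_0_iff[symmetric]) (auto intro: gnn)
  then have "g j = 0" using j by auto
  then show ?thesis by (simp add: g_def)
qed

definition octl :: "nat \<Rightarrow> nat \<Rightarrow> 'u" where "octl j = (\<lambda>t. snd (P ((j + t) mod p)))"

lemma orbit_traj:
  assumes j: "j < p"
  shows "traj f (fst (P j)) (octl j) n = fst (P ((j + n) mod p))"
proof (induction n)
  case 0 then show ?case using j by simp
next
  case (Suc n)
  have "(j + n) mod p < p" using p_pos by simp
  then show ?case using Suc by (simp add: octl_def orbf mod_Suc_eq)
qed

lemma orbit_cost:
  assumes j: "j < p"
  shows "(\<Sum>t<n. l (traj f (fst (P j)) (octl j) t) (octl j t) - es)
          = lam (fst (P ((j + n) mod p))) - lam (fst (P j))"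
proof (induction n)
  case 0 then show ?case using j by simp
next
  case (Suc n)
  have jn: "(j + n) mod p < p" using p_pos by simp
  have "l (traj f (fst (P j)) (octl j) n) (octl j n) - es
        = lam (fst (P (Suc ((j + n) mod p) mod p))) - lam (fst (P ((j + n) mod p)))"
    using orbit_eq[OF jn] orbit_traj[OF j, of n] by (simp add: octl_def)
  then show ?case using Suc by (simp add: mod_Suc_eq)
qed

lemma LB:
  assumes adm: "admissible f X U N x u" and ab: "a \<le> b" "b \<le> N"
  shows "(\<Sum>i\<in>{a..<b}. l (traj f x u i) (u i) - es) \<ge> lam (traj f x u b) - lam (traj f x u a)"
  using ab
proof (induction b rule: dec_induct)
  case base then show ?case by simp
next
  case (step b)
  have "traj f x u b \<in> X" "u b \<in> U" "traj f x u (Suc b) \<in> X"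
    using adm step by (auto simp: admissible_def)
  then have "l (traj f x u b) (u b) - es + lam (traj f x u b) - lam (traj f x u (Suc b)) \<ge> 0"
    using diss by simp
  then show ?case using step by simp
qed

lemma LB2:
  assumes adm: "admissible f X U N x u" and ab: "a \<le> b" "b \<le> N"
  shows "(\<Sum>i\<in>{a..<b}. l (traj f x u i) (u i) - es) \<ge> - 2 * lbar"
proof -
  have "traj f x u b \<in> X" "traj f x u a \<in> X" using adm ab by (auto simp: admissible_def)
  then have "\<bar>lam (traj f x u b)\<bar> \<le> lbar" "\<bar>lam (traj f x u a)\<bar> \<le> lbar" using lamb by auto
  then show ?thesis using LB[OF assms] by linarith
qed

lemma near_orbit:
  assumes "orbit_dist p P (y, v) \<le> kappa"
  shows "\<exists>j<p. norm (y - fst (P j)) \<le> kappa"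
proof -
  have "orbit_dist p P (y, v) \<in> (\<lambda>k. norm ((y, v) - P k)) ` {..<p}"
    unfolding orbit_dist_def using p_pos by (intro Min_in) auto
  then obtain j where j: "j < p" "orbit_dist p P (y, v) = norm ((y, v) - P j)" by auto
  have "norm (y - fst (P j)) \<le> norm ((y, v) - P j)"
    using real_sqrt_sum_squares_ge1[of "norm (fst ((y, v) - P j))" "norm (snd ((y, v) - P j))"]
    unfolding norm_prod_def by simp
  then show ?thesis using j assms by force
qed

lemma tail:
  assumes y: "y \<in> X" and j: "j < p" and yn: "norm (y - fst (P j)) \<le> kappa"
  shows "\<exists>w. (\<forall>t. w t \<in> U) \<and> (\<forall>t. traj f y w t \<in> X) \<and>
     (\<forall>n. (\<Sum>t<n. l (traj f y w t) (w t) - es) \<le> real M' * L + 2 * lbar)"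
proof -
  obtain v where v: "admissible f X U M' y v" "traj f y v M' = fst (P j)"
    using steer y yn j by force
  define w where "w = cat v M' (octl j)"
  have wU: "w t \<in> U" for t
    using v(1) orbU p_pos by (auto simp: w_def cat_def admissible_def octl_def)
  have trj: "traj f y w (M' + d) = fst (P ((j + d) mod p))" for d
    unfolding w_def traj_cat_ge v(2) using orbit_traj[OF j] .
  have wX: "traj f y w t \<in> X" for t
  proof (cases "t \<le> M'")
    case True then show ?thesis using v(1) traj_cat_le[OF True, of f y v "octl j"] by (auto simp: w_def admissible_def)
  next
    case False
    then obtain d where "t = M' + d" by (metis le_add_diff_inverse nat_le_linear)
    then show ?thesis using trj orbX p_pos by simp
  qed
  have cst: "(\<Sum>t<n. l (traj f y w t) (w t) - es) \<le> real M' * L + 2 * lbar" for n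
  proof (cases "n \<le> M'")
    case True
    have "(\<Sum>t<n. l (traj f y w t) (w t) - es) \<le> (\<Sum>t<n. L)"
      using Lb wU wX es_nonneg by (intro sum_mono) (smt (verit))
    also have "\<dots> \<le> real M' * L" using True L_nonneg by (simp add: mult_right_mono)
    finally show ?thesis using lbar_nonneg by simp
  next
    case False
    then obtain d where n: "n = M' + d" by (metis le_add_diff_inverse nat_le_linear)
    have "(\<Sum>t<n. l (traj f y w t) (w t) - es) = (\<Sum>t<M'. l (traj f y w t) (w t) - es)
           + (\<Sum>t<d. l (traj f y w (M' + t)) (w (M' + t)) - es)"
      unfolding n by (rule sum_split_add)
    also have "(\<Sum>t<M'. l (traj f y w t) (w t) - es) \<le> (\<Sum>t<M'. L)"
      using Lb wU wX es_nonneg by (intro sum_mono) (smt (verit))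
    also have "(\<Sum>t<d. l (traj f y w (M' + t)) (w (M' + t)) - es)
        = (\<Sum>t<d. l (traj f (fst (P j)) (octl j) t) (octl j t) - es)"
      by (intro sum.cong refl) (simp only: trj orbit_traj[OF j], simp add: w_def cat_def)
    also have "\<dots> = lam (fst (P ((j + d) mod p))) - lam (fst (P j))"
      by (rule orbit_cost[OF j])
    also have "\<dots> \<le> 2 * lbar"
      using lamb orbX[OF j] orbX[of "(j + d) mod p"] p_pos
      by (smt (verit, best) mod_less_divisor)
    finally show ?thesis by simp
  qed
  show ?thesis using wU wX cst by blast
qed

end


lemma splice_adm:
  assumes adm: "admissible f X U n x u" and kn: "k \<le> n"
    and wU: "\<forall>t. w t \<in> U" and wX: "\<forall>t. traj f (traj f x u k) w t \<in> X"
  shows "admissible f X U T x (cat u k w)"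
  unfolding admissible_def
proof safe
  fix i assume "i < T"
  show "cat u k w i \<in> U" using adm kn wU by (auto simp: cat_def admissible_def)
next
  fix i assume "i \<le> T"
  show "traj f x (cat u k w) i \<in> X"
  proof (cases "i \<le> k")
    case True then show ?thesis using adm kn traj_cat_le[OF True, of f x u w] by (auto simp: admissible_def)
  next
    case False
    then obtain d where "i = k + d" by (metis le_add_diff_inverse nat_le_linear)
    then show ?thesis using wX traj_cat_ge[of f x u k w d] by simp
  qed
qed

context mpc begin

lemma key:
  assumes adm: "\<exists>u. admissible f X U N x u"
    and Q: "real (card {k. k < N \<and> orbit_dist p P (traj f x (uopt N x) k, uopt N x k) \<le> kappa}) \<ge> real N - F"
    and F0: "F \<ge> 0" and W1: "W \<ge> 1" and G: "G = nat \<lfloor>F\<rfloor> + 1"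
    and big: "nat \<lfloor>F\<rfloor> + W + G < N"
  shows "\<exists>u'. admissible f X U (Suc N) x u' \<and> u' 0 = uopt N x 0 \<and>
     (\<Sum>i<Suc N. real (Suc N - i) * l (traj f x u' i) (u' i))
       - (\<Sum>i<N. real (N - i) * l (traj f x (uopt N x) i) (uopt N x i)) - real (Suc N) * es
     \<le> F * L + real N * (real M' * L + 2 * lbar + 2 * lbar) / real W
        + (real W + real G + 1) * (real M' * L + 2 * lbar) + 2 * lbar * (real W + real G)"
proof -
  define B0 where "B0 = real M' * L + 2 * lbar"
  have B0: "B0 \<ge> 0" using L_nonneg lbar_nonneg by (simp add: B0_def)
  define u where "u = uopt N x"
  have admu: "admissible f X U N x u" and optu: "ereal (Jbeta f l N x u) = Vbeta f X U l N x"
    using uopt adm unfolding u_def by auto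
  define near where "near k \<longleftrightarrow> orbit_dist p P (traj f x u k, u k) \<le> kappa" for k
  define Far where "Far = {k. k < N \<and> \<not> near k}"
  have finF: "finite Far" unfolding Far_def by simp
  have cardFar: "real (card Far) \<le> F"
  proof -
    have "{k. k < N \<and> near k} \<union> Far = {..<N}" "{k. k < N \<and> near k} \<inter> Far = {}"
      unfolding Far_def by auto
    then have "card {k. k < N \<and> near k} + card Far = N"
      using card_Un_disjoint[of "{k. k < N \<and> near k}" Far] finF by simp
    then show ?thesis using Q unfolding near_def u_def by linarith
  qed
  have exnear: "\<exists>k\<in>S. near k" if S: "S \<subseteq> {..<N}" "real (card S) > F" for S
  proof (rule ccontr)
    assume "\<not> ?thesis"
    then have "S \<subseteq> Far" using S unfolding Far_def by auto
    then have "card S \<le> card Far" using finF by (rule card_mono[rotated])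
    then show False using S cardFar by linarith
  qed
  have Fl: "F < real (nat \<lfloor>F\<rfloor>) + 1" using F0 by linarith
  have Fl2: "real (nat \<lfloor>F\<rfloor>) \<le> F" using F0 by linarith
  obtain k0 where k0: "k0 \<le> nat \<lfloor>F\<rfloor>" "near k0"
  proof -
    have "\<exists>k\<in>{0..nat \<lfloor>F\<rfloor>}. near k"
      using big Fl by (intro exnear) auto
    then show ?thesis using that by auto
  qed
  define a where "a = N - W - G"
  obtain k where k: "a \<le> k" "k \<le> a + G" "near k"
  proof -
    have "\<exists>k\<in>{a..a + G}. near k"
      using big Fl G W1 unfolding a_def by (intro exnear) auto
    then show ?thesis using that by auto
  qed
  have k0k: "k0 < k" "1 \<le> k" "k < N" "k0 < N" using k k0 big W1 unfolding a_def by auto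
  define M where "M = N - k"
  have M: "W \<le> M" "M \<le> W + G" "M \<ge> 1" using k big W1 unfolding M_def a_def by auto
  have xk0: "traj f x u k0 \<in> X" and xk: "traj f x u k \<in> X"
    using admu k0k by (auto simp: admissible_def)
  obtain j0 where j0: "j0 < p" "norm (traj f x u k0 - fst (P j0)) \<le> kappa"
    using near_orbit k0(2) unfolding near_def by blast
  obtain j where j: "j < p" "norm (traj f x u k - fst (P j)) \<le> kappa"
    using near_orbit k(3) unfolding near_def by blast
  obtain w0 where w0: "\<forall>t. w0 t \<in> U" "\<forall>t. traj f (traj f x u k0) w0 t \<in> X"
      "\<forall>n. (\<Sum>t<n. l (traj f (traj f x u k0) w0 t) (w0 t) - es) \<le> B0"
    using tail[OF xk0 j0] unfolding B0_def by blast
  obtain w where w: "\<forall>t. w t \<in> U" "\<forall>t. traj f (traj f x u k) w t \<in> X"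
      "\<forall>n. (\<Sum>t<n. l (traj f (traj f x u k) w t) (w t) - es) \<le> B0"
    using tail[OF xk j] unfolding B0_def by blast
  define v where "v = cat u k0 w0"
  define u' where "u' = cat u k w"
  have admv: "admissible f X U N x v"
    unfolding v_def using k0k by (intro splice_adm[OF admu _ w0(1,2)]) auto
  have admu': "admissible f X U (Suc N) x u'"
    unfolding u'_def using k0k by (intro splice_adm[OF admu _ w(1,2)]) auto
  have u'0: "u' 0 = u 0" using k0k by (simp add: u'_def cat_def)
  define cu where "cu i = l (traj f x u i) (u i) - es" for i
  define cv where "cv i = l (traj f x v i) (v i) - es" for i
  define cw where "cw i = l (traj f x u' i) (u' i) - es" for i
  have cv_lt: "cv i = cu i" if "i < k0" for i
    using cat_lt[OF that, of "\<lambda>a b. l a b - es" f x u w0] by (simp add: cv_def cu_def v_def)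
  have cw_lt: "cw i = cu i" if "i < k" for i
    using cat_lt[OF that, of "\<lambda>a b. l a b - es" f x u w] by (simp add: cw_def cu_def u'_def)
  have cv_ps: "(\<Sum>i\<in>{k0..m}. cv i) \<le> B0" if "k0 \<le> m" for m
    unfolding cv_def v_def using cat_psum[OF that, of "\<lambda>a b. l a b - es" f x u w0] w0(3) by metis
  have cw_ps: "(\<Sum>i\<in>{k..m}. cw i) \<le> B0" if "k \<le> m" for m
    unfolding cw_def u'_def using cat_psum[OF that, of "\<lambda>a b. l a b - es" f x u w] w(3) by metis
  have cu_ps: "(\<Sum>i\<in>{a'..m}. cu i) \<ge> - 2 * lbar" if "a' \<le> Suc m" "m < N" for a' m
    using LB2[OF admu that(1), of] that(2) unfolding cu_def
    by (simp add: atLeastLessThanSuc_atLeastAtMost)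
  have cu_le: "cu i \<le> L" if "i < N" for i
    using Lb admu that es_nonneg unfolding cu_def admissible_def by (smt (verit) less_imp_le)
  have "Vbeta f X U l N x \<le> ereal (Jbeta f l N x v)"
    unfolding Vbeta_def using admv by (intro INF_lower) simp
  then have Juv: "Jbeta f l N x u \<le> Jbeta f l N x v" using optu by (metis ereal_less_eq(3))
  have N0: "N > 0" using k0k by simp
  have "(\<Sum>i<N. real (N - i) * l (traj f x u i) (u i)) \<le> (\<Sum>i<N. real (N - i) * l (traj f x v i) (v i))"
    using Juv N0 unfolding Jbeta_eq by (simp add: divide_right_mono_neg divide_le_cancel)
  then have "(\<Sum>i<N. real (N - i) * cu i) \<le> (\<Sum>i<N. real (N - i) * cv i)"
    using wsplit[of N "\<lambda>i. l (traj f x u i) (u i)" es] wsplit[of N "\<lambda>i. l (traj f x v i) (v i)" es]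
    unfolding cu_def cv_def by linarith
  then have opt1: "(\<Sum>i\<in>{k0..<N}. real (N - i) * cu i) \<le> (\<Sum>i\<in>{k0..<N}. real (N - i) * cv i)"
    using k0k split_at[of k0 N "\<lambda>i. real (N - i) * cu i"] split_at[of k0 N "\<lambda>i. real (N - i) * cv i"]
    by (simp add: cv_lt)
  have "(\<Sum>i\<in>{k0..<N}. real (N - i) * cv i) = (\<Sum>m\<in>{k0..<N}. \<Sum>i\<in>{k0..m}. cv i)"
    using k0k by (intro cum) simp
  also have "\<dots> \<le> (\<Sum>m\<in>{k0..<N}. B0)" by (intro sum_mono cv_ps) simp
  also have "\<dots> = real (N - k0) * B0" by simp
  finally have opt2: "(\<Sum>i\<in>{k0..<N}. real (N - i) * cv i) \<le> real (N - k0) * B0" .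
  define PP where "PP = (\<Sum>i\<in>{k0..<k}. cu i)"
  have s1: "(\<Sum>i\<in>{k0..<N}. real (N - i) * cu i) = (\<Sum>m\<in>{k0..<N}. \<Sum>i\<in>{k0..m}. cu i)"
    using k0k by (intro cum) simp
  have s2: "(\<Sum>m\<in>{k0..<N}. \<Sum>i\<in>{k0..m}. cu i) = (\<Sum>m\<in>{k0..<k}. \<Sum>i\<in>{k0..m}. cu i) + (\<Sum>m\<in>{k..<N}. \<Sum>i\<in>{k0..m}. cu i)"
    using k0k by (intro sum.atLeastLessThan_concat[symmetric]) auto
  have s3: "(\<Sum>m\<in>{k0..<k}. \<Sum>i\<in>{k0..m}. cu i) \<ge> (\<Sum>m\<in>{k0..<k}. - 2 * lbar)"
    using k0k by (intro sum_mono cu_ps) auto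
  have s4: "(\<Sum>m\<in>{k..<N}. \<Sum>i\<in>{k0..m}. cu i) \<ge> (\<Sum>m\<in>{k..<N}. PP - 2 * lbar)"
  proof (intro sum_mono)
    fix m assume m: "m \<in> {k..<N}"
    have "(\<Sum>i\<in>{k0..m}. cu i) = PP + (\<Sum>i\<in>{k..m}. cu i)"
      unfolding PP_def using m k0k
      by (simp add: atLeastLessThanSuc_atLeastAtMost[symmetric] sum.atLeastLessThan_concat)
    then show "(\<Sum>i\<in>{k0..m}. cu i) \<ge> PP - 2 * lbar" using cu_ps[of k m] m by auto
  qed
  have s5: "(\<Sum>m\<in>{k0..<k}. - 2 * lbar) = real (k - k0) * (- 2 * lbar)" by simp
  have s6: "(\<Sum>m\<in>{k..<N}. PP - 2 * lbar) = real (N - k) * (PP - 2 * lbar)" by simp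
  have "real (k - k0) * (- 2 * lbar) + real (N - k) * (PP - 2 * lbar)
      \<le> real (N - k0) * B0" using opt1 opt2 s1 s2 s3 s4 s5 s6 by linarith
  then have h1: "real M * PP \<le> real (N - k0) * B0 + 2 * lbar * (real (k - k0) + real (N - k))"
    unfolding M_def by (simp add: distrib_left distrib_right right_diff_distrib mult.commute mult.left_commute)
  have h2: "real (k - k0) + real (N - k) = real (N - k0)" using k0k by simp
  have h3: "real (N - k0) * (B0 + 2 * lbar) \<le> real N * (B0 + 2 * lbar)"
    using B0 lbar_nonneg by (intro mult_right_mono) auto
  have PPb: "real M * PP \<le> real N * (B0 + 2 * lbar)"
    using h1 h2 h3 by (simp add: distrib_left mult.commute)
  have eq1: "(\<Sum>i<Suc N. real (Suc N - i) * l (traj f x u' i) (u' i))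
       - (\<Sum>i<N. real (N - i) * l (traj f x u i) (u i)) - real (Suc N) * es
     = (\<Sum>i<Suc N. real (Suc N - i) * cw i) - (\<Sum>i<N. real (N - i) * cu i)"
  proof -
    have e: "es * (real (Suc N) * (real (Suc N) + 1) / 2) - es * (real N * (real N + 1) / 2) = real (Suc N) * es"
      by (simp add: field_simps)
    show ?thesis
      using wsplit[of N "\<lambda>i. l (traj f x u i) (u i)" es] wsplit[of "Suc N" "\<lambda>i. l (traj f x u' i) (u' i)" es]
      unfolding cu_def cw_def using e by linarith
  qed
  have "(\<Sum>i<Suc N. real (Suc N - i) * cw i)
      = (\<Sum>i<k. real (Suc N - i) * cu i) + (\<Sum>i\<in>{k..<Suc N}. real (Suc N - i) * cw i)"
    using split_at[of k "Suc N" "\<lambda>i. real (Suc N - i) * cw i"] k0k by (simp add: cw_lt)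
  moreover have "(\<Sum>i<N. real (N - i) * cu i)
      = (\<Sum>i<k. real (N - i) * cu i) + (\<Sum>i\<in>{k..<N}. real (N - i) * cu i)"
    using split_at[of k N "\<lambda>i. real (N - i) * cu i"] k0k by simp
  moreover have "(\<Sum>i<k. real (Suc N - i) * cu i) = (\<Sum>i<k. real (N - i) * cu i) + (\<Sum>i<k. cu i)"
  proof -
    have "(\<Sum>i<k. real (Suc N - i) * cu i) = (\<Sum>i<k. real (N - i) * cu i + cu i)"
      using k0k by (intro sum.cong) (auto simp: Suc_diff_le algebra_simps)
    then show ?thesis by (simp add: sum.distrib)
  qed
  moreover have "(\<Sum>i\<in>{k..<Suc N}. real (Suc N - i) * cw i) \<le> real (M + 1) * B0"
  proof -
    have "(\<Sum>i\<in>{k..<Suc N}. real (Suc N - i) * cw i) = (\<Sum>m\<in>{k..<Suc N}. \<Sum>i\<in>{k..m}. cw i)"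
      using k0k by (intro cum) simp
    also have "\<dots> \<le> (\<Sum>m\<in>{k..<Suc N}. B0)" by (intro sum_mono cw_ps) simp
    finally show ?thesis using k0k unfolding M_def by (simp add: Suc_diff_le)
  qed
  moreover have "(\<Sum>i\<in>{k..<N}. real (N - i) * cu i) \<ge> - real M * (2 * lbar)"
  proof -
    have "(\<Sum>i\<in>{k..<N}. real (N - i) * cu i) = (\<Sum>m\<in>{k..<N}. \<Sum>i\<in>{k..m}. cu i)"
      using k0k by (intro cum) simp
    also have "\<dots> \<ge> (\<Sum>m\<in>{k..<N}. - 2 * lbar)" by (intro sum_mono cu_ps) auto
    finally show ?thesis unfolding M_def by simp
  qed
  moreover have "(\<Sum>i<k. cu i) \<le> real k0 * L + PP"
  proof -
    have "(\<Sum>i<k. cu i) = (\<Sum>i<k0. cu i) + PP"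
      unfolding PP_def using split_at[of k0 k cu] k0k by simp
    moreover have "(\<Sum>i<k0. cu i) \<le> (\<Sum>i<k0. L)" using k0k by (intro sum_mono cu_le) auto
    ultimately show ?thesis by simp
  qed
  ultimately have tot: "(\<Sum>i<Suc N. real (Suc N - i) * cw i) - (\<Sum>i<N. real (N - i) * cu i)
      \<le> real k0 * L + PP + real (M + 1) * B0 + real M * (2 * lbar)" by linarith
  have b1: "real k0 * L \<le> F * L" using k0 Fl2 L_nonneg by (meson mult_right_mono of_nat_le_iff order_trans)
  have b2: "PP \<le> real N * (B0 + 2 * lbar) / real W"
  proof -
    have "PP \<le> real N * (B0 + 2 * lbar) / real M"
      using PPb M by (simp add: pos_le_divide_eq mult.commute)
    also have "\<dots> \<le> real N * (B0 + 2 * lbar) / real W"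
      using M W1 B0 lbar_nonneg by (intro divide_left_mono) auto
    finally show ?thesis .
  qed
  have b3: "real (M + 1) * B0 \<le> (real W + real G + 1) * B0"
    using M B0 by (intro mult_right_mono) auto
  have b4: "real M * (2 * lbar) \<le> 2 * lbar * (real W + real G)"
    using M lbar_nonneg by (simp add: mult.commute mult_left_mono)
  show ?thesis
    apply (rule exI[of _ u'])
    using admu' u'0 eq1 tot b1 b2 b3 b4 unfolding u_def B0_def by linarith
qed

end


theorem lemma25:
  fixes f :: "'x::euclidean_space \<Rightarrow> 'u::euclidean_space \<Rightarrow> 'x"
    and X :: "'x set" and U :: "'u set"
    and l :: "'x \<Rightarrow> 'u \<Rightarrow> real"
    and pstar :: nat and Pstar :: "nat \<Rightarrow> 'x \<times> 'u"
    and uopt :: "nat \<Rightarrow> 'x \<Rightarrow> nat \<Rightarrow> 'u"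
    and alpha :: "real \<Rightarrow> real"
  assumes l_nonneg: "\<forall>x\<in>X. \<forall>u\<in>U. l x u \<ge> 0"
    and Pstar_orbit: "periodic_orbit f X U pstar Pstar"
    and Pstar_opt: "avg_cost l pstar Pstar = ell_star f X U l"
    and A1: "continuous_on (X \<times> U) (\<lambda>(x, u). f x u)" "continuous_on (X \<times> U) (\<lambda>(x, u). l x u)"
            "compact X" "compact U"
    and A3: "\<exists>lam :: 'x \<Rightarrow> real. \<exists>lbar. \<exists>al. Kinf al \<and> (\<forall>x\<in>X. \<bar>lam x\<bar> \<le> lbar) \<and>
              (\<forall>x\<in>X. \<forall>u\<in>U. f x u \<in> X \<longrightarrow>
                 l x u - ell_star f X U l + lam x - lam (f x u) \<ge> al (orbit_dist pstar Pstar (x, u)))"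
    and A4: "\<exists>kappa > 0. \<exists>M' :: nat. \<exists>rho. Kinf rho \<and>
              (\<forall>z \<in> fst ` Pstar ` {..<pstar}. \<forall>x\<in>X. \<forall>y\<in>X. norm (x - z) \<le> kappa \<longrightarrow> norm (y - z) \<le> kappa \<longrightarrow>
                 (\<exists>u. admissible f X U M' x u \<and> traj f x u M' = y \<and>
                    (\<forall>k<M'. orbit_dist pstar Pstar (traj f x u k, u k)
                        \<le> rho (max (orbit_state_dist pstar Pstar x) (orbit_state_dist pstar Pstar y)))))"
    and uopt_min: "\<forall>N x. (\<exists>u. admissible f X U N x u) \<longrightarrow>
              admissible f X U N x (uopt N x) \<and> ereal (Jbeta f l N x (uopt N x)) = Vbeta f X U l N x"
    and alpha: "Kinf alpha"
  shows "\<exists>delta N0. classL delta \<and> N0 > 0 \<and>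
    (\<forall>x \<in> Xturn f X U uopt pstar Pstar alpha N0. \<forall>N\<ge>N0.
       Vbeta f X U l (N + 1) x \<le> ereal (real N / real (N + 1)) * Vbeta f X U l N x
            + ereal (ell_star f X U l + delta (real (N + 1)))
     \<and> Vbeta f X U l N (f x (uopt N x 0)) \<le> Vbeta f X U l N x
            + ereal (real (N + 1) / real N * (ell_star f X U l - l x (uopt N x 0) + delta (real (N + 1)))))"
proof -
  obtain lam lbar al where H3: "Kinf al \<and> (\<forall>x\<in>X. \<bar>lam x\<bar> \<le> lbar) \<and>
              (\<forall>x\<in>X. \<forall>u\<in>U. f x u \<in> X \<longrightarrow>
                 l x u - ell_star f X U l + lam x - lam (f x u) \<ge> al (orbit_dist pstar Pstar (x, u)))"
    using A3 by (elim exE) (rule that, assumption)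
  have al: "Kinf al" and lamb: "\<forall>x\<in>X. \<bar>lam x\<bar> \<le> lbar"
    and d0: "\<forall>x\<in>X. \<forall>u\<in>U. f x u \<in> X \<longrightarrow>
                 l x u - ell_star f X U l + lam x - lam (f x u) \<ge> al (orbit_dist pstar Pstar (x, u))"
    using H3 by simp_all
  have alnn: "al r \<ge> 0" if "r \<ge> 0" for r
  proof (cases "r = 0")
    case True then show ?thesis using al by (simp add: Kinf_def)
  next
    case False
    have sm: "strict_mono_on {0..} al" and a0: "al 0 = 0" using al unfolding Kinf_def by blast+
    have "al 0 < al r" using strict_mono_onD[OF sm, of 0 r] False that by simp
    then show ?thesis using a0 by simp
  qed
  have odnn: "orbit_dist pstar Pstar z \<ge> 0" for z
  proof -
    have "pstar > 0" using Pstar_orbit by (simp add: periodic_orbit_def)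
    then have "orbit_dist pstar Pstar z \<in> (\<lambda>k. norm (z - Pstar k)) ` {..<pstar}"
      unfolding orbit_dist_def by (intro Min_in) auto
    then show ?thesis by auto
  qed
  have diss: "\<forall>x\<in>X. \<forall>u\<in>U. f x u \<in> X \<longrightarrow> l x u - ell_star f X U l + lam x - lam (f x u) \<ge> 0"
    using d0 alnn odnn by (meson order_trans)
  obtain kappa M' rho where H4: "kappa > 0 \<and> Kinf rho \<and> (\<forall>z \<in> fst ` Pstar ` {..<pstar}. \<forall>x\<in>X. \<forall>y\<in>X. norm (x - z) \<le> kappa \<longrightarrow> norm (y - z) \<le> kappa \<longrightarrow>
                 (\<exists>u. admissible f X U M' x u \<and> traj f x u M' = y \<and>
                    (\<forall>k<M'. orbit_dist pstar Pstar (traj f x u k, u k)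
                        \<le> rho (max (orbit_state_dist pstar Pstar x) (orbit_state_dist pstar Pstar y)))))"
    using A4 by (elim exE conjE) (rule that, intro conjI, assumption+)
  have kap: "kappa > 0" using H4 by simp
  have A4': "\<forall>z \<in> fst ` Pstar ` {..<pstar}. \<forall>x\<in>X. \<forall>y\<in>X. norm (x - z) \<le> kappa \<longrightarrow> norm (y - z) \<le> kappa \<longrightarrow>
                 (\<exists>u. admissible f X U M' x u \<and> traj f x u M' = y \<and>
                    (\<forall>k<M'. orbit_dist pstar Pstar (traj f x u k, u k)
                        \<le> rho (max (orbit_state_dist pstar Pstar x) (orbit_state_dist pstar Pstar y))))"
    using H4 by (elim conjE)
  have steer: "\<forall>z\<in>fst ` Pstar ` {..<pstar}. \<forall>x\<in>X. norm (x - z) \<le> kappa \<longrightarrow>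
                  (\<exists>u. admissible f X U M' x u \<and> traj f x u M' = z)"
  proof (intro ballI impI)
    fix z x assume z: "z \<in> fst ` Pstar ` {..<pstar}" and x: "x \<in> X" "norm (x - z) \<le> kappa"
    have "z \<in> X" using z Pstar_orbit by (auto simp: periodic_orbit_def mem_Times_iff)
    then show "\<exists>u. admissible f X U M' x u \<and> traj f x u M' = z"
      using A4'[rule_format, OF z x(1) \<open>z \<in> X\<close> x(2)] kap by auto
  qed
  obtain L where Lb: "\<forall>x\<in>X. \<forall>u\<in>U. l x u \<le> L"
  proof -
    have "compact ((\<lambda>(x, u). l x u) ` (X \<times> U))"
      by (rule compact_continuous_image[OF A1(2) compact_Times[OF A1(3) A1(4)]])
    then obtain a where "\<forall>y\<in>(\<lambda>(x, u). l x u) ` (X \<times> U). norm y \<le> a"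
      using compact_imp_bounded bounded_iff by metis
    then have "\<forall>x\<in>X. \<forall>u\<in>U. l x u \<le> a" by force
    then show ?thesis using that by blast
  qed
  interpret m: mpc f X U l pstar Pstar "ell_star f X U l" lam lbar L kappa M' uopt
    using l_nonneg Pstar_orbit Pstar_opt diss lamb Lb kap steer uopt_min by unfold_locales auto
  have akap: "alpha kappa > 0"
  proof -
    have sm: "strict_mono_on {0..} alpha" and a0: "alpha 0 = 0" using alpha unfolding Kinf_def by blast+
    have "alpha 0 < alpha kappa" using strict_mono_onD[OF sm, of 0 kappa] kap by simp
    then show ?thesis using a0 by simp
  qed
  define c where "c = 1 / alpha kappa"
  have c0: "c \<ge> 0" using akap by (simp add: c_def)
  define es where "es = ell_star f X U l"
  define B0 where "B0 = real M' * L + 2 * lbar"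
  have B0: "B0 \<ge> 0" using m.L_nonneg m.lbar_nonneg by (simp add: B0_def)
  define K1 where "K1 = c * L + B0 + 2 * lbar + (4 + c) * B0 + 2 * lbar * (3 + c)"
  have K1: "K1 \<ge> 0" using c0 B0 m.L_nonneg m.lbar_nonneg by (simp add: K1_def)
  define delta where "delta t = 2 * K1 / sqrt (t + 1)" for t :: real
  define N0 where "N0 = nat \<lceil>(2 * c + 5)^2\<rceil>"
  have classL: "classL delta"
    unfolding classL_def
  proof (intro conjI allI impI)
    show "continuous_on {0..} delta" unfolding delta_def
      by (intro continuous_intros) auto
  next
    fix t :: real assume "t \<ge> 0" then show "delta t \<ge> 0" using K1 by (simp add: delta_def)
  next
    fix s t :: real assume "0 \<le> s" "s \<le> t"
    then show "delta t \<le> delta s" unfolding delta_def using K1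
      by (intro divide_left_mono) auto
  next
    have "filterlim (\<lambda>t::real. t + 1) at_top at_top"
      using filterlim_tendsto_add_at_top[OF tendsto_const[of "1::real"] filterlim_ident]
      by (simp add: add.commute)
    then have "filterlim (\<lambda>t::real. sqrt (t + 1)) at_top at_top"
      by (rule filterlim_compose[OF sqrt_at_top])
    then show "(delta \<longlongrightarrow> 0) at_top" unfolding delta_def
      by (intro tendsto_divide_0[OF tendsto_const] filterlim_at_top_imp_at_infinity)
  qed
  have N0pos: "N0 > 0" unfolding N0_def using c0 by (simp add: power2_eq_square)
  have main: "\<exists>u'. admissible f X U (Suc N) x u' \<and> u' 0 = uopt N x 0 \<and>
     (\<Sum>i<Suc N. real (Suc N - i) * l (traj f x u' i) (u' i))
       - (\<Sum>i<N. real (N - i) * l (traj f x (uopt N x) i) (uopt N x i)) - real (Suc N) * es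
     \<le> real (Suc N) * delta (real (N + 1))"
    if x: "x \<in> Xturn f X U uopt pstar Pstar alpha N0" and N: "N \<ge> N0" for x N
  proof -
    define s where "s = sqrt (real N)"
    have s5: "s \<ge> 2 * c + 5"
    proof -
      have "real N \<ge> (2 * c + 5)^2" using N unfolding N0_def by linarith
      then show ?thesis unfolding s_def using c0 real_le_rsqrt by auto
    qed
    have s1: "s \<ge> 1" using s5 c0 by linarith
    have ss: "s * s = real N" unfolding s_def by simp
    define F where "F = s / alpha kappa"
    have Fc: "F = c * s" unfolding F_def c_def by simp
    define W where "W = nat \<lceil>s\<rceil>"
    define G where "G = nat \<lfloor>F\<rfloor> + 1"
    have F0: "F \<ge> 0" using c0 s1 Fc by simp
    have Wi: "real W = real_of_int \<lceil>s\<rceil>" unfolding W_def using s1 by simp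
    have Wr: "s \<le> real W" "real W \<le> s + 1" unfolding Wi by linarith+
    have W1: "W \<ge> 1" using Wr s1 by linarith
    have Gr: "real G \<le> F + 1" unfolding G_def using F0 by linarith
    have Fr: "real (nat \<lfloor>F\<rfloor>) \<le> F" using F0 by linarith
    have big: "nat \<lfloor>F\<rfloor> + W + G < N"
    proof -
      have "s * s \<ge> (2 * c + 5) * s" using s5 s1 by (intro mult_right_mono) auto
      then have "real N \<ge> (2 * c + 1) * s + 4 * s" using ss by (simp add: algebra_simps)
      moreover have "(2 * c + 1) * s + 4 * s = 2 * (c * s) + 5 * s" by (simp add: algebra_simps)
      moreover have "real (nat \<lfloor>F\<rfloor> + W + G) = real (nat \<lfloor>F\<rfloor>) + real W + real G"
        by (simp only: of_nat_add)
      ultimately have "real (nat \<lfloor>F\<rfloor> + W + G) < real N" using Fr Wr Gr Fc s1 by linarith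
      then show ?thesis by linarith
    qed
    have xin: "\<exists>u. admissible f X U N x u"
      and Q: "real (Qcount f uopt pstar Pstar kappa N x) \<ge> real N - sqrt (real N) / alpha kappa"
      using x N kap unfolding Xturn_def by auto
    have Q': "real (card {k. k < N \<and> orbit_dist pstar Pstar (traj f x (uopt N x) k, uopt N x k) \<le> kappa}) \<ge> real N - F"
      using Q unfolding Qcount_def F_def s_def .
    obtain u' where u': "admissible f X U (Suc N) x u'" "u' 0 = uopt N x 0"
      and D: "(\<Sum>i<Suc N. real (Suc N - i) * l (traj f x u' i) (u' i))
       - (\<Sum>i<N. real (N - i) * l (traj f x (uopt N x) i) (uopt N x i)) - real (Suc N) * es
     \<le> F * L + real N * (real M' * L + 2 * lbar + 2 * lbar) / real W
        + (real W + real G + 1) * (real M' * L + 2 * lbar) + 2 * lbar * (real W + real G)"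
      using m.key[OF xin Q' F0 W1 G_def big] unfolding es_def by blast
    have e1: "F * L = c * L * s" using Fc by simp
    have e2: "real N * (B0 + 2 * lbar) / real W \<le> (B0 + 2 * lbar) * s"
    proof -
      have "real N * (B0 + 2 * lbar) / real W \<le> real N * (B0 + 2 * lbar) / s"
        using Wr s1 B0 m.lbar_nonneg by (intro divide_left_mono) auto
      also have "\<dots> = (B0 + 2 * lbar) * s" using ss s1 by (simp add: field_simps)
      finally show ?thesis .
    qed
    have e3: "(real W + real G + 1) * B0 \<le> (4 + c) * s * B0"
    proof -
      have "real W + real G + 1 \<le> (4 + c) * s" using Wr Gr Fc s1 by (simp add: algebra_simps)
      then show ?thesis using B0 by (intro mult_right_mono) auto
    qed
    have e4: "2 * lbar * (real W + real G) \<le> 2 * lbar * (3 + c) * s"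
    proof -
      have "real W + real G \<le> (3 + c) * s" using Wr Gr Fc s1 by (simp add: algebra_simps)
      then show ?thesis using m.lbar_nonneg mult_left_mono[of _ _ "2 * lbar"] by (simp add: mult.assoc)
    qed
    have EK: "F * L + real N * (real M' * L + 2 * lbar + 2 * lbar) / real W
        + (real W + real G + 1) * (real M' * L + 2 * lbar) + 2 * lbar * (real W + real G) \<le> K1 * s"
    proof -
      have k: "K1 * s = c * L * s + (B0 + 2 * lbar) * s + (4 + c) * s * B0 + 2 * lbar * (3 + c) * s"
        unfolding K1_def by (simp add: algebra_simps)
      show ?thesis using e1 e2 e3 e4 k unfolding B0_def[symmetric] by linarith
    qed
    have "K1 * s \<le> real (Suc N) * delta (real (N + 1))"
    proof -
      have sq: "s * sqrt (real N + 2) \<le> real N + 1"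
      proof -
        have "s * sqrt (real N + 2) = sqrt (real N * (real N + 2))" unfolding s_def by (simp add: real_sqrt_mult)
        also have "\<dots> \<le> sqrt ((real N + 1)^2)" by (intro real_sqrt_le_mono) (simp add: power2_eq_square algebra_simps)
        also have "\<dots> = real N + 1" by simp
        finally show ?thesis .
      qed
      have pos: "sqrt (real N + 2) > 0" by simp
      have "K1 * s * sqrt (real N + 2) \<le> K1 * (real N + 1)"
        using sq K1 by (simp add: mult.assoc mult_left_mono)
      also have "\<dots> \<le> 2 * K1 * (real N + 1)" using K1 by simp
      finally have "K1 * s \<le> 2 * K1 * (real N + 1) / sqrt (real N + 2)"
        using pos by (simp add: pos_le_divide_eq)
      moreover have "real (Suc N) * delta (real (N + 1)) = 2 * K1 * (real N + 1) / sqrt (real N + 2)"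
        unfolding delta_def by (simp add: add.commute add.left_commute)
      ultimately show ?thesis by simp
    qed
    then show ?thesis using u' D EK by (intro exI[of _ u']) auto
  qed
  show ?thesis
  proof (intro exI[of _ delta] exI[of _ N0] conjI[OF classL conjI[OF N0pos]] ballI allI impI)
    fix x N assume x: "x \<in> Xturn f X U uopt pstar Pstar alpha N0" and N: "N0 \<le> N"
    obtain u' where u': "admissible f X U (Suc N) x u'" "u' 0 = uopt N x 0"
      and D: "(\<Sum>i<Suc N. real (Suc N - i) * l (traj f x u' i) (u' i))
       - (\<Sum>i<N. real (N - i) * l (traj f x (uopt N x) i) (uopt N x i)) - real (Suc N) * es
     \<le> real (Suc N) * delta (real (N + 1))"
      using main[OF x N] by blast
    have Npos: "N > 0" using N N0pos by simp
    have xin: "\<exists>u. admissible f X U N x u" using x N unfolding Xturn_def by auto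
    have optu: "ereal (Jbeta f l N x (uopt N x)) = Vbeta f X U l N x" using uopt_min xin by auto
    define A where "A = (\<Sum>i<Suc N. real (Suc N - i) * l (traj f x u' i) (u' i))"
    define Bs where "Bs = (\<Sum>i<N. real (N - i) * l (traj f x (uopt N x) i) (uopt N x i))"
    define dd where "dd = delta (real (N + 1))"
    have D': "A - Bs - real (Suc N) * es \<le> real (Suc N) * dd" using D unfolding A_def Bs_def dd_def .
    have JA: "Jbeta f l (N + 1) x u' = A / real (Suc N)" unfolding A_def Jbeta_eq by simp
    have JB: "Jbeta f l N x (uopt N x) = Bs / real N" unfolding Bs_def Jbeta_eq by simp
    have V1: "Vbeta f X U l (N + 1) x \<le> ereal (A / real (Suc N))"
      unfolding Vbeta_def JA[symmetric] using u'(1) by (intro INF_lower) simp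
    have r1: "A / real (Suc N) \<le> real N / real (N + 1) * (Bs / real N) + (es + dd)"
    proof -
      have "A \<le> Bs + real (Suc N) * (es + dd)" using D' by (simp add: algebra_simps)
      then have "A / real (Suc N) \<le> (Bs + real (Suc N) * (es + dd)) / real (Suc N)"
        by (intro divide_right_mono) auto
      also have "\<dots> = real N / real (N + 1) * (Bs / real N) + (es + dd)"
        using Npos by (simp add: field_simps)
      finally show ?thesis .
    qed
    have first: "Vbeta f X U l (N + 1) x \<le> ereal (real N / real (N + 1)) * Vbeta f X U l N x
            + ereal (ell_star f X U l + delta (real (N + 1)))"
    proof -
      have "ereal (real N / real (N + 1)) * Vbeta f X U l N x + ereal (ell_star f X U l + delta (real (N + 1)))
          = ereal (real N / real (N + 1) * (Bs / real N) + (es + dd))"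
        using optu[symmetric] JB by (simp add: es_def dd_def)
      then show ?thesis using V1 r1 by (metis ereal_less_eq(3) order_trans)
    qed
    define x1 where "x1 = f x (uopt N x 0)"
    define sh where "sh = (\<lambda>i. u' (Suc i))"
    have trsh: "traj f x1 sh i = traj f x u' (Suc i)" for i
      unfolding x1_def sh_def u'(2)[symmetric] by (rule traj_shift)
    have admsh: "admissible f X U N x1 sh"
      using u'(1) trsh unfolding admissible_def sh_def by auto
    have Ash: "A = real (Suc N) * l x (uopt N x 0) + (\<Sum>i<N. real (N - i) * l (traj f x1 sh i) (sh i))"
    proof -
      have "A = real (Suc N) * l x (uopt N x 0) + (\<Sum>i<N. real (Suc N - Suc i) * l (traj f x u' (Suc i)) (u' (Suc i)))"
        unfolding A_def sum.lessThan_Suc_shift using u'(2) by simp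
      also have "(\<Sum>i<N. real (Suc N - Suc i) * l (traj f x u' (Suc i)) (u' (Suc i)))
          = (\<Sum>i<N. real (N - i) * l (traj f x1 sh i) (sh i))"
        by (intro sum.cong refl) (simp only: trsh, simp add: sh_def)
      finally show ?thesis .
    qed
    define Cs where "Cs = (\<Sum>i<N. real (N - i) * l (traj f x1 sh i) (sh i))"
    have V2: "Vbeta f X U l N x1 \<le> ereal (Cs / real N)"
      unfolding Vbeta_def Cs_def Jbeta_eq[symmetric] using admsh by (intro INF_lower) simp
    have r2: "Cs / real N \<le> Bs / real N
            + real (N + 1) / real N * (es - l x (uopt N x 0) + dd)"
    proof -
      have "Cs \<le> Bs + real (N + 1) * (es - l x (uopt N x 0) + dd)"
        using D' Ash unfolding Cs_def by (simp add: algebra_simps)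
      then have "Cs / real N \<le> (Bs + real (N + 1) * (es - l x (uopt N x 0) + dd)) / real N"
        by (intro divide_right_mono) auto
      also have "\<dots> = Bs / real N + real (N + 1) / real N * (es - l x (uopt N x 0) + dd)"
        using Npos by (simp add: field_simps)
      finally show ?thesis .
    qed
    have second: "Vbeta f X U l N (f x (uopt N x 0)) \<le> Vbeta f X U l N x
            + ereal (real (N + 1) / real N * (ell_star f X U l - l x (uopt N x 0) + delta (real (N + 1))))"
    proof -
      have "Vbeta f X U l N x + ereal (real (N + 1) / real N * (ell_star f X U l - l x (uopt N x 0) + delta (real (N + 1))))
          = ereal (Bs / real N + real (N + 1) / real N * (es - l x (uopt N x 0) + dd))"
        using optu[symmetric] JB by (simp add: es_def dd_def)
      then show ?thesis using V2 r2 unfolding x1_def by (metis ereal_less_eq(3) order_trans)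
    qed
    show "Vbeta f X U l (N + 1) x \<le> ereal (real N / real (N + 1)) * Vbeta f X U l N x
            + ereal (ell_star f X U l + delta (real (N + 1)))
     \<and> Vbeta f X U l N (f x (uopt N x 0)) \<le> Vbeta f X U l N x
            + ereal (real (N + 1) / real N * (ell_star f X U l - l x (uopt N x 0) + delta (real (N + 1))))"
      using first second by blast
  qed
qed


end
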